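(* Let $w(x,y)=x^{a_1}y^{b_1}\cdots x^{a_k}y^{b_k}\in F_2$ with all integers $a_i\neq0$, $b_i\neq 0$, let $B=\sum_{i=1}^k b_i\neq 0$ and $B_i=\sum_{j<i}b_j$. Write $2B_i=k_iB+T_i$ with integers $k_i$ and $0\le T_i<B$. If the word map $w:\mathrm{SL}(2,\mathbb{C})^2\to\mathrm{SL}(2,\mathbb{C})$ is not surjective, then for every integer $0\le T<B$, $$\sum_{i:\,T_i=T} a_i(-1)^{k_i}=0.$$
   Context: The word map sends $(X,Y)$ to $X^{a_1}Y^{b_1}\cdots X^{a_k}Y^{b_k}$. *)

theory Defs
  imports "HOL-Analysis.Analysis"
begin

definition SL2 :: "(complex^2^2) set" where
  "SL2 = {A. det A = 1}"

fun mat_pow :: "complex^2^2 \<Rightarrow> nat \<Rightarrow> complex^2^2" where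
  "mat_pow A 0 = mat 1"
| "mat_pow A (Suc n) = A ** mat_pow A n"

definition mat_zpow :: "complex^2^2 \<Rightarrow> int \<Rightarrow> complex^2^2" where
  "mat_zpow A z = (if 0 \<le> z then mat_pow A (nat z) else mat_pow (matrix_inv A) (nat (- z)))"

definition word_map :: "int list \<Rightarrow> int list \<Rightarrow> complex^2^2 \<Rightarrow> complex^2^2 \<Rightarrow> complex^2^2" where
  "word_map as bs X Y = foldr (\<lambda>(a, b) acc. mat_zpow X a ** mat_zpow Y b ** acc) (zip as bs) (mat 1)"

text \<open>0-indexed: B_i = sum of b_j for j < i; 2 B_i = k_i B + T_i with 0 \<le> T_i < |B|.\<close>
definition Bpre :: "int list \<Rightarrow> nat \<Rightarrow> int" where
  "Bpre bs i = sum_list (take i bs)"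

definition Tval :: "int list \<Rightarrow> nat \<Rightarrow> int" where
  "Tval bs i = (2 * Bpre bs i) mod \<bar>sum_list bs\<bar>"

definition kval :: "int list \<Rightarrow> nat \<Rightarrow> int" where
  "kval bs i = (2 * Bpre bs i - Tval bs i) div sum_list bs"

end

theory Submission
  imports Defs "HOL-Computational_Algebra.Polynomial"
begin

definition m2 :: "complex \<Rightarrow> complex \<Rightarrow> complex \<Rightarrow> complex \<Rightarrow> complex^2^2" where
 "m2 a b c d = (\<chi> i j. if i = 1 then (if j = 1 then a else b) else (if j = 1 then c else d))"

lemma m2_nth[simp]: "m2 a b c d $ 1 $ 1 = a" "m2 a b c d $ 1 $ 2 = b" "m2 a b c d $ 2 $ 1 = c" "m2 a b c d $ 2 $ 2 = d"
  by (simp_all add: m2_def)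

lemma m2_eq_iff: "A = m2 a b c d \<longleftrightarrow> A$1$1 = a \<and> A$1$2 = b \<and> A$2$1 = c \<and> A$2$2 = d"
  by (auto simp: vec_eq_iff forall_2)

lemma m2_eq: "A = m2 (A$1$1) (A$1$2) (A$2$1) (A$2$2)"
  by (simp add: m2_eq_iff)

lemma m2_mult: "m2 a b c d ** m2 a' b' c' d' = m2 (a*a'+b*c') (a*b'+b*d') (c*a'+d*c') (c*b'+d*d')"
  by (simp add: m2_eq_iff matrix_matrix_mult_def sum_2)

lemma m2_one: "mat 1 = m2 1 0 0 1"
  by (simp add: m2_eq_iff mat_def)

lemma m2_det: "det (m2 a b c d) = a*d - b*c"
  by (simp add: det_2)



lemma matrix_inv_eq:
  fixes A B :: "complex^2^2"
  assumes "A ** B = mat 1" "B ** A = mat 1"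
  shows "matrix_inv A = B"
proof -
  have "A ** matrix_inv A = mat 1 \<and> matrix_inv A ** A = mat 1"
    unfolding matrix_inv_def by (rule someI[of _ B]) (use assms in auto)
  then have "matrix_inv A = (B ** A) ** matrix_inv A" using assms by (simp add: matrix_mul_lid)
  also have "\<dots> = B" using \<open>A ** matrix_inv A = mat 1 \<and> _\<close>
    by (simp add: matrix_mul_assoc[symmetric] matrix_mul_rid)
  finally show ?thesis .
qed

lemma matrix_inv_props:
  fixes A :: "complex^2^2"
  assumes "invertible A"
  shows "A ** matrix_inv A = mat 1" "matrix_inv A ** A = mat 1"
  using someI_ex[OF assms[unfolded invertible_def]] unfolding matrix_inv_def by auto

lemma mat_pow_unip: "mat_pow (m2 1 s 0 1) n = m2 1 (of_nat n * s) 0 1"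
  by (induction n) (simp_all add: m2_one m2_mult algebra_simps)

lemma mat_pow_diag: "mat_pow (m2 t 0 0 u) n = m2 (t^n) 0 0 (u^n)"
  by (induction n) (simp_all add: m2_one m2_mult algebra_simps)

lemma inv_unip: "matrix_inv (m2 1 s 0 1) = m2 1 (-s) 0 1"
  by (rule matrix_inv_eq) (simp_all add: m2_one m2_mult)

lemma inv_diag: "t \<noteq> 0 \<Longrightarrow> matrix_inv (m2 t 0 0 (inverse t)) = m2 (inverse t) 0 0 t"
  by (rule matrix_inv_eq) (simp_all add: m2_one m2_mult)

lemma zpow_unip: "mat_zpow (m2 1 s 0 1) a = m2 1 (of_int a * s) 0 1"
  by (simp add: mat_zpow_def mat_pow_unip inv_unip)

lemma zpow_diag: "t \<noteq> 0 \<Longrightarrow> mat_zpow (m2 t 0 0 (inverse t)) b = m2 (t powi b) 0 0 (t powi (-b))"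
  by (auto simp add: mat_zpow_def mat_pow_diag inv_diag power_int_def power_inverse)

lemma zpow_one: "mat_zpow (mat 1) a = mat 1"
  using zpow_unip[of 0 a] by (simp add: m2_one)

lemma word_cons: "word_map (a#as) (b#bs) X Y = mat_zpow X a ** mat_zpow Y b ** word_map as bs X Y"
  by (simp add: word_map_def)

lemma family2:
  assumes "length as = length bs"
  shows "word_map as bs (mat 1) (m2 1 u 0 1) = m2 1 (of_int (sum_list bs) * u) 0 1"
  using assms
proof (induction as bs rule: list_induct2)
  case Nil then show ?case by (simp add: word_map_def m2_one)
next
  case (Cons a as b bs)
  then show ?case by (simp add: word_cons zpow_one zpow_unip m2_mult matrix_mul_lid algebra_simps)
qed

lemma family1:
  assumes "length as = length bs" "t \<noteq> 0"
  shows "word_map as bs (m2 1 s 0 1) (m2 t 0 0 (inverse t)) =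
     m2 (t powi sum_list bs) (s * (\<Sum>i<length as. of_int (as!i) * t powi (2*Bpre bs i - sum_list bs))) 0 (t powi (- sum_list bs))"
  using assms(1)
proof (induction as bs rule: list_induct2)
  case Nil then show ?case by (simp add: word_map_def m2_one)
next
  case (Cons a as b bs)
  have B: "Bpre (b#bs) (Suc i) = b + Bpre bs i" for i by (simp add: Bpre_def)
  have B0: "Bpre (b#bs) 0 = 0" by (simp add: Bpre_def)
  have e: "2 * (b + Bpre bs i) - (b + sum_list bs) = b + (2 * Bpre bs i - sum_list bs)" for i by simp
  let ?Q = "\<lambda>as bs. (\<Sum>i<length as. of_int (as!i) * t powi (2*Bpre bs i - sum_list bs))"
  have Q: "?Q (a#as) (b#bs) = of_int a * t powi (- (b + sum_list bs)) + t powi b * ?Q as bs"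
    unfolding length_Cons sum.lessThan_Suc_shift
    by (simp add: B B0 e power_int_add assms(2) sum_distrib_left algebra_simps
         add_diff_eq[symmetric] del: add_diff_eq diff_add_eq)
  have one: "t powi b * (t powi sum_list bs * t powi (- b - sum_list bs)) = 1"
    using assms(2) by (simp add: power_int_add[symmetric])
  show ?case
    unfolding word_cons Cons.IH zpow_diag[OF assms(2)] zpow_unip m2_mult Q
    using assms(2) one by (simp add: m2_eq_iff power_int_add algebra_simps power_int_minus field_simps)
qed



lemma conj_pow:
  fixes g g' X :: "complex^2^2"
  assumes "g ** g' = mat 1" "g' ** g = mat 1"
  shows "mat_pow (g ** X ** g') n = g ** mat_pow X n ** g'"
proof (induction n)
  case 0 then show ?case using assms by (simp add: matrix_mul_rid)
next
  case (Suc n)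
  have "g ** X ** g' ** (g ** mat_pow X n ** g') = g ** X ** (g' ** g) ** mat_pow X n ** g'"
    by (simp add: matrix_mul_assoc)
  then show ?case using Suc assms by (simp add: matrix_mul_rid matrix_mul_assoc)
qed

lemma conj_inv:
  fixes g g' X :: "complex^2^2"
  assumes "g ** g' = mat 1" "g' ** g = mat 1" "invertible X"
  shows "matrix_inv (g ** X ** g') = g ** matrix_inv X ** g'"
proof (rule matrix_inv_eq)
  note i = matrix_inv_props[OF assms(3)]
  have "g ** X ** g' ** (g ** matrix_inv X ** g') = g ** X ** (g' ** g) ** matrix_inv X ** g'"
    by (simp add: matrix_mul_assoc)
  also have "\<dots> = g ** (X ** matrix_inv X) ** g'" by (simp add: assms matrix_mul_rid matrix_mul_assoc)
  finally show "g ** X ** g' ** (g ** matrix_inv X ** g') = mat 1" using i assms by (simp add: matrix_mul_rid)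
  have "g ** matrix_inv X ** g' ** (g ** X ** g') = g ** matrix_inv X ** (g' ** g) ** X ** g'"
    by (simp add: matrix_mul_assoc)
  also have "\<dots> = g ** (matrix_inv X ** X) ** g'" by (simp add: assms matrix_mul_rid matrix_mul_assoc)
  finally show "g ** matrix_inv X ** g' ** (g ** X ** g') = mat 1" using i assms by (simp add: matrix_mul_rid)
qed

lemma conj_zpow:
  fixes g g' X :: "complex^2^2"
  assumes "g ** g' = mat 1" "g' ** g = mat 1" "invertible X"
  shows "mat_zpow (g ** X ** g') a = g ** mat_zpow X a ** g'"
  using assms by (simp add: mat_zpow_def conj_pow conj_inv)

lemma conj_word:
  fixes g g' X Y :: "complex^2^2"
  assumes "g ** g' = mat 1" "g' ** g = mat 1" "invertible X" "invertible Y" "length as = length bs"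
  shows "word_map as bs (g ** X ** g') (g ** Y ** g') = g ** word_map as bs X Y ** g'"
  using assms(5)
proof (induction as bs rule: list_induct2)
  case Nil then show ?case using assms by (simp add: word_map_def matrix_mul_rid)
next
  case (Cons a as b bs)
  have "g ** mat_zpow X a ** g' ** (g ** mat_zpow Y b ** g') ** (g ** word_map as bs X Y ** g')
     = g ** mat_zpow X a ** (g' ** g) ** mat_zpow Y b ** (g' ** g) ** word_map as bs X Y ** g'"
    by (simp add: matrix_mul_assoc)
  then show ?case using assms Cons.IH
    by (simp add: word_cons conj_zpow matrix_mul_rid matrix_mul_assoc)
qed

lemma SL2_inv: "X \<in> SL2 \<Longrightarrow> invertible X"
  by (simp add: SL2_def invertible_det_nz)




lemma kval_eq:
  assumes "sum_list bs \<noteq> 0"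
  shows "2 * Bpre bs i = kval bs i * sum_list bs + Tval bs i"
proof -
  let ?B = "sum_list bs" and ?x = "2 * Bpre bs i"
  have "\<bar>?B\<bar> dvd ?x - ?x mod \<bar>?B\<bar>" by (rule dvd_minus_mod)
  then have "?B dvd ?x - ?x mod \<bar>?B\<bar>" by (simp only: abs_dvd_iff)
  then have "?B dvd ?x - Tval bs i" by (simp only: Tval_def)
  then show ?thesis unfolding kval_def by simp
qed

lemma Tval_range: "sum_list bs \<noteq> 0 \<Longrightarrow> 0 \<le> Tval bs i \<and> Tval bs i < \<bar>sum_list bs\<bar>"
  by (simp add: Tval_def)

lemma exists_t:
  assumes B: "sum_list bs \<noteq> 0"
    and hyp: "0 \<le> T0" "T0 < \<bar>sum_list bs\<bar>"
      "(\<Sum>i \<in> {i. i < length as \<and> Tval bs i = T0}. as ! i * (if even (kval bs i) then 1 else -1)) \<noteq> (0::int)"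
  shows "\<exists>t::complex. t \<noteq> 0 \<and> t powi sum_list bs = -1 \<and>
     (\<Sum>i<length as. of_int (as!i) * t powi (2*Bpre bs i - sum_list bs)) \<noteq> 0"
proof -
  define n where "n = nat \<bar>sum_list bs\<bar>"
  have n0: "n > 0" using B by (simp add: n_def)
  define eps where "eps i = (if even (kval bs i) then 1 else -1 :: int)" for i
  define cz where "cz T = (\<Sum>i \<in> {i. i < length as \<and> Tval bs i = int T}. as ! i * eps i)" for T :: nat
  define P where "P = (\<Sum>T<n. monom (of_int (cz T) :: complex) T)"
  have cT0: "cz (nat T0) \<noteq> 0" using hyp by (simp add: cz_def eps_def)
  have "coeff P (nat T0) = of_int (cz (nat T0))"
    using hyp by (simp add: P_def coeff_sum n_def)
  then have P0: "P \<noteq> 0" using cT0 by auto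
  have degP: "degree P < n" unfolding P_def
    by (rule degree_sum_less) (auto simp: degree_monom_le n0 intro: le_less_trans[OF degree_monom_le])
  have "card {x. poly P x = 0} < n" using card_poly_roots_bound[OF P0] degP by linarith
  also have "n = card {z::complex. z ^ n = -1}" using card_nth_roots[of "-1" n] n0 by simp
  finally have "\<not> {z::complex. z ^ n = -1} \<subseteq> {x. poly P x = 0}"
    using card_mono[OF poly_roots_finite[OF P0]] by (meson not_le)
  then obtain t :: complex where tn: "t ^ n = -1" and Pt: "poly P t \<noteq> 0" by auto
  have t0: "t \<noteq> 0" using tn n0 by (auto simp: zero_power)
  have tB: "t powi sum_list bs = -1"
  proof (cases "sum_list bs \<ge> 0")
    case True
    then have "sum_list bs = int n" by (simp add: n_def)
    then show ?thesis using tn by simp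
  next
    case False
    then have "sum_list bs = - int n" by (simp add: n_def)
    then show ?thesis using tn by (simp add: power_int_minus)
  qed
  have term_eq: "of_int (as!i) * t powi (2*Bpre bs i - sum_list bs) =
      - (of_int (as!i * eps i) * t ^ nat (Tval bs i))" for i
  proof -
    have "t powi (2*Bpre bs i - sum_list bs) = t powi (kval bs i * sum_list bs) * t powi (Tval bs i) * t powi (- sum_list bs)"
      using kval_eq[OF B, of i] t0 by (simp add: power_int_add power_int_diff power_int_minus divide_inverse)
    also have "\<dots> = (if even (kval bs i) then 1 else -1) * t ^ nat (Tval bs i) * (-1)"
    proof -
      have a: "t powi (kval bs i * sum_list bs) = (if even (kval bs i) then 1 else -1)"
        using tB by (simp add: power_int_mult mult.commute[of "kval bs i"])
      have b: "t powi (Tval bs i) = t ^ nat (Tval bs i)"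
        using Tval_range[OF B, of i] by (simp add: power_int_def)
      have c: "t powi (- sum_list bs) = -1" using tB by (simp add: power_int_minus)
      show ?thesis by (simp only: a b c)
    qed
    finally show ?thesis by (simp add: eps_def)
  qed
  have "(\<Sum>i<length as. of_int (as!i * eps i) * t ^ nat (Tval bs i))
      = (\<Sum>T\<in>{..<n}. \<Sum>i\<in>{i\<in>{..<length as}. nat (Tval bs i) = T}. of_int (as!i * eps i) * t ^ nat (Tval bs i))"
    by (rule sum.group[symmetric]) (use Tval_range[OF B] B in \<open>auto simp: n_def\<close>)
  also have "\<dots> = (\<Sum>T<n. of_int (cz T) * t ^ T)"
  proof (rule sum.cong[OF refl])
    fix T assume "T \<in> {..<n}"
    have "{i\<in>{..<length as}. nat (Tval bs i) = T} = {i. i < length as \<and> Tval bs i = int T}"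
      using Tval_range[OF B] by fastforce
    then show "(\<Sum>i\<in>{i\<in>{..<length as}. nat (Tval bs i) = T}. of_int (as!i * eps i) * t ^ nat (Tval bs i)) = of_int (cz T) * t ^ T"
      by (simp add: cz_def sum_distrib_right)
  qed
  also have "\<dots> = poly P t" by (simp add: P_def poly_sum poly_monom)
  finally have "(\<Sum>i<length as. of_int (as!i) * t powi (2*Bpre bs i - sum_list bs)) = - poly P t"
    by (simp add: term_eq sum_negf)
  then show ?thesis using Pt t0 tB by auto
qed



definition img :: "int list \<Rightarrow> int list \<Rightarrow> (complex^2^2) set" where
  "img as bs = {M. \<exists>X \<in> SL2. \<exists>Y \<in> SL2. word_map as bs X Y = M}"

lemma img_conj:
  assumes "M \<in> img as bs" "g ** g' = mat 1" "g' ** g = mat 1" "length as = length bs"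
  shows "g ** M ** g' \<in> img as bs"
proof -
  obtain X Y where XY: "X \<in> SL2" "Y \<in> SL2" "word_map as bs X Y = M" using assms(1) by (auto simp: img_def)
  have dg: "det g * det g' = 1" using assms(2) by (metis det_I det_mul)
  have sl: "g ** Z ** g' \<in> SL2" if "Z \<in> SL2" for Z
    using that dg by (simp add: SL2_def det_mul)
  show ?thesis unfolding img_def
    using XY sl conj_word[OF assms(2,3) SL2_inv SL2_inv assms(4), of X Y] by blast
qed

lemma m2_SL2: "a*d - b*c = 1 \<Longrightarrow> m2 a b c d \<in> SL2"
  by (simp add: SL2_def m2_det)

lemma nth_root_ex: "n > 0 \<Longrightarrow> c \<noteq> 0 \<Longrightarrow> \<exists>z::complex. z ^ n = c"
proof -
  assume a: "n > 0" "c \<noteq> 0"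
  have "card {z::complex. z^n = c} = n" by (rule card_nth_roots) (use a in auto)
  then have "{z::complex. z^n = c} \<noteq> {}" using a(1) by (intro notI) simp
  then obtain z where "z \<in> {z::complex. z^n = c}" by blast
  then show ?thesis by auto
qed

lemma e_lemma:
  fixes l c :: complex
  assumes ne: "inverse l - l \<noteq> 0" and l0: "l \<noteq> 0"
  shows "m2 1 (c / (inverse l - l)) 0 1 ** m2 l 0 0 (inverse l) ** m2 1 (-(c / (inverse l - l))) 0 1 = m2 l c 0 (inverse l)"
proof -
  define d where "d = c / (inverse l - l)"
  have "d * (inverse l - l) = c" using ne by (simp add: d_def)
  then have "- (l * d) + d * inverse l = c" by (simp add: algebra_simps)
  then show ?thesis unfolding d_def[symmetric] m2_mult by simp
qed
lemma ne_lemma: "l \<noteq> (1::complex) \<Longrightarrow> l \<noteq> -1 \<Longrightarrow> l \<noteq> 0 \<Longrightarrow> inverse l - l \<noteq> 0"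
proof
  assume "l \<noteq> 1" "l \<noteq> -1" "l \<noteq> 0" "inverse l - l = 0"
  then have "l * l = 1" by (simp add: field_simps)
  then have "(l - 1) * (l + 1) = 0" by (simp add: algebra_simps)
  then have "l - 1 = 0 \<or> l + 1 = 0" by simp
  then show False using \<open>l \<noteq> 1\<close> \<open>l \<noteq> -1\<close> by (simp add: add_eq_0_iff2)
qed

lemma upper_in_img:
  assumes len: "length as = length bs" and B: "sum_list bs \<noteq> 0"
    and hyp: "0 \<le> T0" "T0 < \<bar>sum_list bs\<bar>"
      "(\<Sum>i \<in> {i. i < length as \<and> Tval bs i = T0}. as ! i * (if even (kval bs i) then 1 else -1)) \<noteq> (0::int)"
    and l0: "l \<noteq> 0"
  shows "m2 l c 0 (inverse l) \<in> img as bs"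
proof -
  let ?B = "sum_list bs"
  let ?Q = "\<lambda>t::complex. (\<Sum>i<length as. of_int (as!i) * t powi (2*Bpre bs i - sum_list bs))"
  consider "l = 1" | "l = -1" | "l \<noteq> 1" "l \<noteq> -1" by blast
  then show ?thesis
  proof cases
    case 1
    define u where "u = c / of_int ?B"
    have "word_map as bs (mat 1) (m2 1 u 0 1) = m2 l c 0 (inverse l)"
      using family2[OF len, of u] B 1 by (simp add: u_def)
    moreover have "mat 1 \<in> SL2" "m2 1 u 0 1 \<in> SL2" by (simp_all add: m2_one m2_SL2)
    ultimately show ?thesis by (auto simp: img_def)
  next
    case 2
    from exists_t[OF B hyp] obtain t where tt: "t \<noteq> 0 \<and> t powi ?B = -1 \<and> ?Q t \<noteq> 0" ..
    have t: "t \<noteq> 0" "t powi ?B = -1" "?Q t \<noteq> 0" using tt by simp_all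
    define s where "s = c / ?Q t"
    have tB': "t powi (- ?B) = -1" unfolding power_int_minus t(2) by simp
    have sQ: "s * ?Q t = c" using t(3) unfolding s_def by simp
    have "word_map as bs (m2 1 s 0 1) (m2 t 0 0 (inverse t)) = m2 (-1) c 0 (-1)"
      unfolding family1[OF len t(1)] sQ t(2) tB' by (rule refl)
    then have "word_map as bs (m2 1 s 0 1) (m2 t 0 0 (inverse t)) = m2 l c 0 (inverse l)"
      using 2 by simp
    moreover have "m2 1 s 0 1 \<in> SL2" "m2 t 0 0 (inverse t) \<in> SL2" using t by (simp_all add: m2_SL2)
    ultimately show ?thesis by (auto simp: img_def)
  next
    case 3
    define n where "n = nat \<bar>?B\<bar>"
    have n0: "n > 0" using B by (simp add: n_def)
    obtain t where tB: "t powi ?B = l"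
    proof (cases "?B \<ge> 0")
      case True
      obtain z where "z ^ n = l" using nth_root_ex[OF n0 l0] by blast
      then show ?thesis using that[of z] True by (simp add: n_def power_int_def)
    next
      case False
      obtain z where "z ^ n = inverse l" using nth_root_ex[OF n0] l0 by (metis inverse_nonzero_iff_nonzero)
      moreover have "z powi ?B = inverse (z ^ nat (- ?B))" using False by (simp add: power_int_def power_inverse)
      moreover have "nat (- ?B) = n" using False by (simp add: n_def)
      ultimately have "z powi ?B = l" by simp
      then show ?thesis by (rule that)
    qed
    have t0: "t \<noteq> 0" using tB l0 B by (cases "t = 0") auto
    have tB': "t powi (- ?B) = inverse l" using tB by (simp add: power_int_minus)
    have D: "word_map as bs (m2 1 0 0 1) (m2 t 0 0 (inverse t)) = m2 l 0 0 (inverse l)"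
      unfolding family1[OF len t0] using tB tB' by simp
    have "m2 1 0 0 1 \<in> SL2" "m2 t 0 0 (inverse t) \<in> SL2" using t0 by (simp_all add: m2_SL2)
    then have Dimg: "m2 l 0 0 (inverse l) \<in> img as bs" using D by (auto simp: img_def)
    have ne: "inverse l - l \<noteq> 0" using ne_lemma 3 l0 by blast
    define d where "d = c / (inverse l - l)"
    have e: "m2 1 d 0 1 ** m2 l 0 0 (inverse l) ** m2 1 (-d) 0 1 = m2 l c 0 (inverse l)"
      unfolding d_def by (rule e_lemma[OF ne l0])
    have gg1: "m2 1 d 0 1 ** m2 1 (-d) 0 1 = mat 1" by (simp add: m2_mult m2_one)
    have gg2: "m2 1 (-d) 0 1 ** m2 1 d 0 1 = mat 1" by (simp add: m2_mult m2_one)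
    show ?thesis unfolding e[symmetric] by (rule img_conj[OF Dimg gg1 gg2 len])
  qed
qed

lemma Mg_lemma:
  fixes p q r s l :: complex
  assumes det: "p * s - q * r = 1" and lq: "l^2 - (p+s)*l + 1 = 0" and l0: "l \<noteq> 0"
  shows "m2 p q r s ** m2 (l - s) 1 r 0 = m2 (l - s) 1 r 0 ** m2 l 1 0 (inverse l)"
proof -
  have qr: "q * r = p * s - 1" using det by (simp add: algebra_simps eq_diff_eq)
  have pe: "p = l - s + inverse l" using lq l0 by (simp add: power2_eq_square field_simps)
  have e1: "p * (l - s) + q * r = (l - s) * l" unfolding qr pe using l0 by (simp add: field_simps)
  show ?thesis unfolding m2_mult m2_eq_iff m2_nth
    by (simp only: mult_1_right mult_zero_right mult_zero_left mult_1_left add_0_right add_0_left e1 pe[symmetric])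
       (simp add: algebra_simps)
qed

lemma all_in_img:
  assumes len: "length as = length bs" and B: "sum_list bs \<noteq> 0"
    and hyp: "0 \<le> T0" "T0 < \<bar>sum_list bs\<bar>"
      "(\<Sum>i \<in> {i. i < length as \<and> Tval bs i = T0}. as ! i * (if even (kval bs i) then 1 else -1)) \<noteq> (0::int)"
    and M: "M \<in> SL2"
  shows "M \<in> img as bs"
proof -
  obtain p q r s where Mq: "M = m2 p q r s" using m2_eq by blast
  have det: "p * s - q * r = 1" using M Mq by (simp add: SL2_def m2_det)
  show ?thesis
  proof (cases "r = 0")
    case True
    then have "p \<noteq> 0" "s = inverse p" using det by (auto simp: inverse_unique[symmetric])
    then show ?thesis using upper_in_img[OF len B hyp \<open>p \<noteq> 0\<close>, of q] Mq True by simp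
  next
    case False
    define l where "l = ((p+s) + csqrt ((p+s)^2 - 4)) / 2"
    have lq: "l^2 - (p+s)*l + 1 = 0"
    proof -
      have "2*l - (p+s) = csqrt ((p+s)^2 - 4)" unfolding l_def by (simp add: field_simps)
      then have "(2*l - (p+s))^2 = (p+s)^2 - 4" by (simp add: power2_csqrt)
      then have "4 * (l^2 - (p+s)*l + 1) = 0" by (simp add: power2_eq_square algebra_simps)
      then show ?thesis by (simp only: mult_eq_0_iff) simp
    qed
    have l0: "l \<noteq> 0" using lq by auto
    define g where "g = m2 (l - s) 1 r 0"
    define g' where "g' = m2 0 (1/r) 1 (-(l-s)/r)"
    have gg: "g ** g' = mat 1" "g' ** g = mat 1" using False by (simp_all add: g_def g'_def m2_mult m2_one field_simps)
    have Mg: "M ** g = g ** m2 l 1 0 (inverse l)"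
      unfolding Mq g_def by (rule Mg_lemma[OF det lq l0])
    have "M = M ** g ** g'" by (metis gg(1) matrix_mul_assoc matrix_mul_rid)
    also have "\<dots> = g ** m2 l 1 0 (inverse l) ** g'" using Mg by simp
    finally show ?thesis using img_conj[OF upper_in_img[OF len B hyp l0] gg len] by simp
  qed
qed

theorem corollary7p3:
  fixes as bs :: "int list"
  assumes "length as = length bs"
    and "\<forall>i < length as. as ! i \<noteq> 0 \<and> bs ! i \<noteq> 0"
    and "sum_list bs \<noteq> 0"
    and "\<not> (\<forall>M \<in> SL2. \<exists>X \<in> SL2. \<exists>Y \<in> SL2. word_map as bs X Y = M)"
  shows "\<forall>T::int. 0 \<le> T \<and> T < \<bar>sum_list bs\<bar> \<longrightarrow>
           (\<Sum>i \<in> {i. i < length as \<and> Tval bs i = T}.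
              as ! i * (if even (kval bs i) then 1 else -1)) = 0"
proof (rule ccontr)
  assume "\<not> ?thesis"
  then obtain T0 where h: "0 \<le> T0" "T0 < \<bar>sum_list bs\<bar>"
    "(\<Sum>i \<in> {i. i < length as \<and> Tval bs i = T0}. as ! i * (if even (kval bs i) then 1 else -1)) \<noteq> (0::int)"
    by blast
  have "\<forall>M \<in> SL2. \<exists>X \<in> SL2. \<exists>Y \<in> SL2. word_map as bs X Y = M"
    using all_in_img[OF assms(1) assms(3) h] unfolding img_def by blast
  then show False using assms(4) by blast
qed


end
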